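(* Let $\Gamma$ be an abelian group containing no element of order two. Let $M_1,M_2$ be matroids on a common ground set $E$, $\psi\colon E\to\Gamma$ a labeling, and $B_0$ a common basis of $M_1,M_2$ with $\psi(B_0)=0$. Then $M_1$ and $M_2$ have a common basis $B^*$ with $\psi(B^* )\neq0$ if and only if $D_{M_1,M_2}(B_0)$ contains a directed cycle $C$ with $\psi'(C)\ne 0$.
   Context: $\psi(S):=\sum_{x\in S}\psi(x)$. For a common basis $B$ of $M_1,M_2$, the digraph $D_{M_1,M_2}(B)$ has vertex set $E$ and arcs: for each $x\in B$, $y\in E\setminus B$ with $B-x+y$ a basis of $M_1$, an arc $xy$ with label $\psi'(xy):=\psi(y)$; and for each $x\in B$, $y\in E\setminus B$ with $B-x+y$ a basis of $M_2$, an arc $yx$ with label $\psi'(yx):=-\psi(x)$. The label $\psi'(C)$ of a directed cycle is the sum of the labels of its arcs. *)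

theory Defs
  imports Main
begin

definition matroid :: "'a set \<Rightarrow> 'a set set \<Rightarrow> bool" where
  "matroid E \<B> \<longleftrightarrow> finite E \<and> \<B> \<noteq> {} \<and> (\<forall>B\<in>\<B>. B \<subseteq> E) \<and>
     (\<forall>B1\<in>\<B>. \<forall>B2\<in>\<B>. \<forall>x\<in>B1 - B2. \<exists>y\<in>B2 - B1. insert y (B1 - {x}) \<in> \<B>)"

definition exch_arcs :: "'a set \<Rightarrow> 'a set set \<Rightarrow> 'a set set \<Rightarrow> 'a set \<Rightarrow> ('a \<times> 'a) set" where
  "exch_arcs E M1 M2 B =
     {(x, y). x \<in> B \<and> y \<in> E - B \<and> insert y (B - {x}) \<in> M1} \<union>
     {(y, x). x \<in> B \<and> y \<in> E - B \<and> insert y (B - {x}) \<in> M2}"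

definition arc_label :: "('a \<Rightarrow> 'g::ab_group_add) \<Rightarrow> 'a set \<Rightarrow> 'a \<times> 'a \<Rightarrow> 'g" where
  "arc_label \<psi> B a = (if fst a \<in> B then \<psi> (snd a) else - \<psi> (snd a))"

definition directed_cycle :: "('a \<times> 'a) set \<Rightarrow> 'a list \<Rightarrow> bool" where
  "directed_cycle A cs \<longleftrightarrow> cs \<noteq> [] \<and> distinct cs \<and>
     (\<forall>i < length cs. (cs ! i, cs ! ((i + 1) mod length cs)) \<in> A)"

definition cycle_label :: "('a \<times> 'a \<Rightarrow> 'g::ab_group_add) \<Rightarrow> 'a list \<Rightarrow> 'g" where
  "cycle_label lab cs = (\<Sum>i < length cs. lab (cs ! i, cs ! ((i + 1) mod length cs)))"

end

theory Submission
  imports Defs "HOL-Library.Multiset"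
begin


lemma matroid_sub: "matroid E M \<Longrightarrow> B \<in> M \<Longrightarrow> B \<subseteq> E"
  unfolding matroid_def by blast

lemma matroid_finite: "matroid E M \<Longrightarrow> B \<in> M \<Longrightarrow> finite B"
  using matroid_sub[of E M B] finite_subset[of B E] unfolding matroid_def by blast

lemma exch: "matroid E M \<Longrightarrow> B1 \<in> M \<Longrightarrow> B2 \<in> M \<Longrightarrow> x \<in> B1 - B2 \<Longrightarrow> \<exists>y\<in>B2 - B1. insert y (B1 - {x}) \<in> M"
  unfolding matroid_def by blast

lemma bases_card_aux:
  assumes m: "matroid E M"
  shows "B1 \<in> M \<Longrightarrow> B2 \<in> M \<Longrightarrow> card (B1 - B2) = k \<Longrightarrow> card B1 = card B2"
proof (induction k arbitrary: B1 rule: less_induct)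
  case (less k)
  have fin1: "finite B1" "finite B2" using matroid_finite[OF m] less.prems by auto
  show ?case
  proof (cases "B1 - B2 = {}")
    case True
    have "B2 - B1 = {}"
    proof (rule ccontr)
      assume "B2 - B1 \<noteq> {}"
      then obtain x where "x \<in> B2 - B1" by blast
      then obtain y where "y \<in> B1 - B2" using exch[OF m less.prems(2) less.prems(1)] by blast
      then show False using True by blast
    qed
    then show ?thesis using True by (metis Diff_eq_empty_iff subset_antisym)
  next
    case False
    then obtain x where x: "x \<in> B1 - B2" by blast
    then obtain y where y: "y \<in> B2 - B1" "insert y (B1 - {x}) \<in> M"
      using exch[OF m less.prems(1) less.prems(2)] by blast
    let ?B = "insert y (B1 - {x})"
    have "?B - B2 = (B1 - B2) - {x}" using x y by auto
    moreover have "card ((B1 - B2) - {x}) < card (B1 - B2)"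
      using x fin1 by (intro card_Diff1_less) auto
    ultimately have c: "card (?B - B2) < k" using less.prems(3) by simp
    have "card B1 > 0" using x fin1 card_gt_0_iff by blast
    hence "card ?B = card B1" using x y fin1 by (simp add: card_insert_if)
    moreover have "card ?B = card B2" using less.IH[OF c y(2) less.prems(2) refl] .
    ultimately show ?thesis by simp
  qed
qed

lemma bases_card: "matroid E M \<Longrightarrow> B1 \<in> M \<Longrightarrow> B2 \<in> M \<Longrightarrow> card B1 = card B2"
  using bases_card_aux[OF _ _ _ refl] by metis

lemma bext_aux:
  assumes m: "matroid E M" and B: "B \<in> M"
  shows "B1 \<in> M \<Longrightarrow> I \<subseteq> B1 \<Longrightarrow> card (B1 - (I \<union> B)) = k \<Longrightarrow> \<exists>B''\<in>M. I \<subseteq> B'' \<and> B'' \<subseteq> I \<union> B"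
proof (induction k arbitrary: B1 rule: less_induct)
  case (less k)
  have fin1: "finite B1" using matroid_finite[OF m] less.prems by auto
  show ?case
  proof (cases "B1 - (I \<union> B) = {}")
    case True then show ?thesis using less.prems by blast
  next
    case False
    then obtain z where z: "z \<in> B1 - (I \<union> B)" by blast
    then obtain w where w: "w \<in> B - B1" "insert w (B1 - {z}) \<in> M"
      using exch[OF m less.prems(1) B] by blast
    let ?B = "insert w (B1 - {z})"
    have "?B - (I \<union> B) = (B1 - (I \<union> B)) - {z}" using z w by auto
    moreover have "card ((B1 - (I \<union> B)) - {z}) < card (B1 - (I \<union> B))"
      using z fin1 by (intro card_Diff1_less) auto
    ultimately have c: "card (?B - (I \<union> B)) < k" using less.prems(3) by simp
    have "I \<subseteq> ?B" using z less.prems by auto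
    then show ?thesis using less.IH[OF c w(2) _ refl] by blast
  qed
qed

lemma bext: "matroid E M \<Longrightarrow> B \<in> M \<Longrightarrow> B1 \<in> M \<Longrightarrow> I \<subseteq> B1 \<Longrightarrow> \<exists>B''\<in>M. I \<subseteq> B'' \<and> B'' \<subseteq> I \<union> B"
  using bext_aux[OF _ _ _ _ refl] by metis

definition Circ :: "'a set set \<Rightarrow> 'a set \<Rightarrow> 'a \<Rightarrow> 'a set" where
  "Circ M B y = {x. x = y \<or> (x \<in> B \<and> insert y (B - {x}) \<in> M)}"

lemma card_swap: "finite B \<Longrightarrow> x \<in> B \<Longrightarrow> y \<notin> B \<Longrightarrow> card (insert y (B - {x})) = card B"
proof -
  assume a: "finite B" "x \<in> B" "y \<notin> B"
  have "card B > 0" using a card_gt_0_iff by blast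
  moreover have "card (insert y (B - {x})) = Suc (card (B - {x}))"
    using a by (intro card_insert_disjoint) auto
  moreover have "card (B - {x}) = card B - 1" using a by (intro card_Diff_singleton)
  ultimately show ?thesis by simp
qed

lemma card_insert_remove:
  assumes "finite B" "card B'' = card B" "y \<in> B''" "y \<notin> B" "B'' \<subseteq> insert y B"
  shows "\<exists>x\<in>B. x \<notin> B'' \<and> B'' = insert y (B - {x})"
proof -
  have fin: "finite B''" using finite_subset[OF assms(5)] assms(1) by simp
  have s: "B'' - {y} \<subseteq> B" using assms(5) by auto
  have c: "card (B'' - {y}) = card B - 1" using assms(2,3) fin by simp
  have "\<not> B \<subseteq> B'' - {y}"
  proof
    assume "B \<subseteq> B'' - {y}"
    hence "card B \<le> card (B'' - {y})" using fin by (intro card_mono) auto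
    hence "card B \<le> card B - 1" using c by simp
    hence "card B = 0" by simp
    hence "card B'' = 0" using assms(2) by simp
    hence "B'' = {}" using fin by simp
    thus False using assms(3) by simp
  qed
  then obtain x where x: "x \<in> B" "x \<notin> B''" using assms(4) by blast
  have sub: "B'' \<subseteq> insert y (B - {x})" using x assms(5) by auto
  have "card (insert y (B - {x})) = card B''" using card_swap[OF assms(1) x(1) assms(4)] assms(2) by simp
  moreover have "finite (insert y (B - {x}))" using assms(1) by simp
  ultimately have "B'' = insert y (B - {x})" using card_subset_eq[OF _ sub] by simp
  then show ?thesis using x by blast
qed

lemma circ_dep:
  assumes m: "matroid E M" and B: "B \<in> M" and y: "y \<notin> B" and B': "B' \<in> M"
  shows "\<not> Circ M B y \<subseteq> B'"
proof
  assume a: "Circ M B y \<subseteq> B'"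
  obtain B'' where B'': "B'' \<in> M" "Circ M B y \<subseteq> B''" "B'' \<subseteq> Circ M B y \<union> B"
    using bext[OF m B B' a] by blast
  have sub: "B'' \<subseteq> insert y B" using B''(3) unfolding Circ_def by auto
  have yin: "y \<in> B''" using B''(2) unfolding Circ_def by auto
  have "card B'' = card B" using bases_card[OF m B''(1) B] .
  then obtain x where x: "x \<in> B" "x \<notin> B''" "B'' = insert y (B - {x})"
    using card_insert_remove[OF matroid_finite[OF m B] _ yin y sub] by blast
  hence "x \<in> Circ M B y" using B''(1) unfolding Circ_def by auto
  then show False using x B''(2) by blast
qed

lemma circ_min:
  assumes B: "B \<in> M" and S: "S \<subseteq> insert y B" and dep: "\<forall>B'\<in>M. \<not> S \<subseteq> B'"
  shows "Circ M B y \<subseteq> S"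
proof
  fix x assume x: "x \<in> Circ M B y"
  show "x \<in> S"
  proof (rule ccontr)
    assume n: "x \<notin> S"
    show False
    proof (cases "x = y")
      case True then have "S \<subseteq> B" using S n by auto
      then show False using dep B by blast
    next
      case False then have "insert y (B - {x}) \<in> M" using x unfolding Circ_def by auto
      moreover have "S \<subseteq> insert y (B - {x})" using S n by auto
      ultimately show False using dep by blast
    qed
  qed
qed

lemma circ_eq:
  assumes m: "matroid E M" and B: "B \<in> M" and B': "B' \<in> M" and y: "y \<notin> B" "y \<notin> B'"
    and sub: "Circ M B y \<subseteq> insert y B'"
  shows "Circ M B' y = Circ M B y"
proof
  show "Circ M B' y \<subseteq> Circ M B y"
    using circ_min[OF B' sub] circ_dep[OF m B y(1)] by blast
  have "Circ M B' y \<subseteq> insert y B" using \<open>Circ M B' y \<subseteq> Circ M B y\<close> unfolding Circ_def by auto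
  then show "Circ M B y \<subseteq> Circ M B' y"
    using circ_min[OF B] circ_dep[OF m B' y(2)] by blast
qed

lemma sym_exch:
  assumes m: "matroid E M" and B: "B \<in> M" and B': "B' \<in> M" and x: "x \<in> B - B'"
  shows "\<exists>y\<in>B' - B. insert y (B - {x}) \<in> M \<and> insert x (B' - {y}) \<in> M"
proof -
  define Y where "Y = Circ M B' x - {x}"
  have YB': "Y \<subseteq> B'" unfolding Y_def Circ_def by auto
  obtain B3 where B3: "B3 \<in> M" "Y \<subseteq> B3" "B3 \<subseteq> Y \<union> B" using bext[OF m B B' YB'] by blast
  have "x \<notin> B3"
  proof
    assume "x \<in> B3"
    then have "Circ M B' x \<subseteq> B3" using B3 unfolding Y_def by auto
    then show False using circ_dep[OF m B' _ B3(1)] x by blast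
  qed
  then have B3s: "B3 \<subseteq> Y \<union> (B - {x})" using B3 by auto
  obtain B4 where B4: "B4 \<in> M" "B - {x} \<subseteq> B4" "B4 \<subseteq> (B - {x}) \<union> B3"
    using bext[OF m B3(1) B, of "B - {x}"] by blast
  have finB: "finite B" using matroid_finite[OF m B] .
  have c4: "card B4 = card B" using bases_card[OF m B4(1) B] .
  have "card (B - {x}) < card B" using card_Diff1_less[OF finB] x by blast
  hence "B4 \<noteq> B - {x}" using c4 by auto
  then obtain y where y: "y \<in> B4" "y \<notin> B - {x}" using B4 by blast
  have yY: "y \<in> Y" using y B4 B3s by blast
  hence yx: "y \<noteq> x" unfolding Y_def by auto
  have yB: "y \<notin> B" using y yx by auto
  have fin4: "finite B4" using matroid_finite[OF m B4(1)] .
  have "B4 = insert y (B - {x})"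
  proof (rule ccontr)
    assume ne: "B4 \<noteq> insert y (B - {x})"
    have s: "insert y (B - {x}) \<subseteq> B4" using y(1) B4(2) by blast
    hence "insert y (B - {x}) \<subset> B4" using ne by blast
    hence "card (insert y (B - {x})) < card B4" by (rule psubset_card_mono[OF fin4])
    moreover have "card (insert y (B - {x})) = card B" using x by (intro card_swap[OF finB _ yB]) auto
    ultimately show False using c4 by simp
  qed
  hence e1: "insert y (B - {x}) \<in> M" using B4 by simp
  have "y \<in> Circ M B' x" using yY unfolding Y_def by auto
  hence e2: "insert x (B' - {y}) \<in> M" using yx unfolding Circ_def by auto
  show ?thesis using e1 e2 yY YB' yB by blast
qed

lemma bij_betw_upd_insert:
  assumes "bij_betw f A A'" "x \<notin> A" "y \<notin> A'"
  shows "bij_betw (f(x := y)) (insert x A) (insert y A')"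
proof -
  have i: "inj_on f A" and im: "f ` A = A'" using assms(1) unfolding bij_betw_def by auto
  have "inj_on (f(x := y)) A" using i assms(2) by (simp add: inj_on_def)
  moreover have "(f(x := y)) ` A = A'" using im assms(2) by auto
  ultimately show ?thesis using assms(2,3) unfolding bij_betw_def
    by (auto simp: inj_on_def)
qed

lemma bij_exch_aux:
  assumes m: "matroid E M" and B: "B \<in> M"
  shows "B' \<in> M \<Longrightarrow> card (B - B') = k \<Longrightarrow>
    \<exists>\<sigma>. bij_betw \<sigma> (B - B') (B' - B) \<and> (\<forall>x\<in>B - B'. insert (\<sigma> x) (B - {x}) \<in> M)"
proof (induction k arbitrary: B' rule: less_induct)
  case (less k)
  have finB: "finite B" using matroid_finite[OF m B] .
  have finB': "finite B'" using matroid_finite[OF m less.prems(1)] .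
  show ?case
  proof (cases "B - B' = {}")
    case True
    hence "B \<subseteq> B'" by blast
    moreover have "card B = card B'" using bases_card[OF m B less.prems(1)] .
    ultimately have "B = B'" using card_subset_eq[OF finB'] by metis
    thus ?thesis by (simp add: bij_betw_def)
  next
    case False
    then obtain x where x: "x \<in> B - B'" by blast
    obtain y where y: "y \<in> B' - B" "insert y (B - {x}) \<in> M" "insert x (B' - {y}) \<in> M"
      using sym_exch[OF m B less.prems(1) x] by blast
    define B1 where "B1 = insert x (B' - {y})"
    have e1: "B - B1 = (B - B') - {x}" unfolding B1_def using y by auto
    have e2: "B1 - B = (B' - B) - {y}" unfolding B1_def using x by auto
    have "card ((B - B') - {x}) < card (B - B')" using x finB by (intro card_Diff1_less) auto
    hence c: "card (B - B1) < k" using e1 less.prems(2) by simp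
    obtain \<sigma>1 where s1: "bij_betw \<sigma>1 (B - B1) (B1 - B)" "\<forall>x\<in>B - B1. insert (\<sigma>1 x) (B - {x}) \<in> M"
      using less.IH[OF c _ refl] y(3) unfolding B1_def by blast
    have b: "bij_betw (\<sigma>1(x := y)) (insert x ((B - B') - {x})) (insert y ((B' - B) - {y}))"
      using bij_betw_upd_insert[of \<sigma>1 "(B - B') - {x}" "(B' - B) - {y}" x y] s1(1) e1 e2 by simp
    have "insert x ((B - B') - {x}) = B - B'" using x by blast
    moreover have "insert y ((B' - B) - {y}) = B' - B" using y by blast
    ultimately have b': "bij_betw (\<sigma>1(x := y)) (B - B') (B' - B)" using b by simp
    have "\<forall>z\<in>B - B'. insert ((\<sigma>1(x := y)) z) (B - {z}) \<in> M"
      using s1(2) y(2) e1 by auto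
    then show ?thesis using b' by blast
  qed
qed

lemma bij_exch:
  "matroid E M \<Longrightarrow> B \<in> M \<Longrightarrow> B' \<in> M \<Longrightarrow>
    \<exists>\<sigma>. bij_betw \<sigma> (B - B') (B' - B) \<and> (\<forall>x\<in>B - B'. insert (\<sigma> x) (B - {x}) \<in> M)"
  using bij_exch_aux[OF _ _ _ refl] by metis

lemma funpow_in: "g ` X \<subseteq> X \<Longrightarrow> x \<in> X \<Longrightarrow> (g ^^ n) x \<in> X"
  by (induction n) auto

lemma funpow_period: "(g ^^ n) z = z \<Longrightarrow> (g ^^ (n * k)) z = z"
proof (induction k)
  case 0 then show ?case by simp
next
  case (Suc k)
  have "(g ^^ (n * Suc k)) z = (g ^^ n) ((g ^^ (n * k)) z)"
    by (simp add: funpow_add add.commute)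
  also have "\<dots> = z" using Suc by simp
  finally show ?case .
qed

lemma periodic:
  assumes fin: "finite X" and ne: "X \<noteq> {}" and gX: "g ` X \<subseteq> X"
  shows "\<exists>W\<subseteq>X. W \<noteq> {} \<and> bij_betw g W W"
proof -
  define W where "W = {z\<in>X. \<exists>n>0. (g ^^ n) z = z}"
  obtain x0 where x0: "x0 \<in> X" using ne by blast
  have "\<not> inj_on (\<lambda>i. (g ^^ i) x0) {..card X}"
  proof
    assume inj: "inj_on (\<lambda>i. (g ^^ i) x0) {..card X}"
    have "(\<lambda>i. (g ^^ i) x0) ` {..card X} \<subseteq> X" using funpow_in[OF gX x0] by blast
    hence "card ((\<lambda>i. (g ^^ i) x0) ` {..card X}) \<le> card X" using fin by (intro card_mono) auto
    moreover have "card ((\<lambda>i. (g ^^ i) x0) ` {..card X}) = Suc (card X)"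
      using card_image[OF inj] by simp
    ultimately show False by simp
  qed
  then obtain i j where ij: "i \<noteq> j" "(g ^^ i) x0 = (g ^^ j) x0"
    unfolding inj_on_def by blast
  have "\<exists>i j. i < j \<and> (g ^^ i) x0 = (g ^^ j) x0"
    using ij by (metis linorder_neqE_nat)
  then obtain i j where ij: "i < j" "(g ^^ i) x0 = (g ^^ j) x0" by blast
  define z where "z = (g ^^ i) x0"
  have "(g ^^ (j - i)) z = (g ^^ (j - i + i)) x0" unfolding z_def by (simp add: funpow_add)
  also have "\<dots> = z" using ij unfolding z_def by simp
  finally have zp: "(g ^^ (j - i)) z = z" .
  have zX: "z \<in> X" unfolding z_def using funpow_in[OF gX x0] .
  have "j - i > 0" using ij by simp
  hence "z \<in> W" unfolding W_def using zX zp by blast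
  hence Wne: "W \<noteq> {}" by blast
  have WX: "W \<subseteq> X" unfolding W_def by blast
  have gW: "g ` W \<subseteq> W"
  proof
    fix u assume "u \<in> g ` W"
    then obtain z n where z: "z \<in> X" "n > 0" "(g ^^ n) z = z" "u = g z" unfolding W_def by blast
    have "(g ^^ n) (g z) = g ((g ^^ n) z)" by (simp add: funpow_swap1)
    then show "u \<in> W" unfolding W_def using z gX by auto
  qed
  have injW: "inj_on g W"
  proof (rule inj_onI)
    fix a b assume a: "a \<in> W" and b: "b \<in> W" and e: "g a = g b"
    obtain n1 where n1: "n1 > 0" "(g ^^ n1) a = a" using a unfolding W_def by blast
    obtain n2 where n2: "n2 > 0" "(g ^^ n2) b = b" using b unfolding W_def by blast
    define N where "N = n1 * n2"
    have N: "N > 0" unfolding N_def using n1 n2 by simp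
    have "(g ^^ N) a = a" unfolding N_def using funpow_period[OF n1(2)] by blast
    moreover have "(g ^^ N) b = b" unfolding N_def using funpow_period[OF n2(2), of n1]
      by (simp add: mult.commute)
    moreover have "(g ^^ N) = (g ^^ (N - 1)) \<circ> g" using N
      by (metis Suc_diff_1 funpow_Suc_right)
    ultimately show "a = b" using e by (metis comp_apply)
  qed
  have "g ` W = W" using endo_inj_surj[OF finite_subset[OF WX fin] gW injW] .
  then show ?thesis using WX Wne injW unfolding bij_betw_def by blast
qed

lemma um_aux:
  assumes m: "matroid E M"
  shows "card X = k \<Longrightarrow> B \<in> M \<Longrightarrow> finite X \<Longrightarrow> X \<subseteq> B \<Longrightarrow> inj_on \<sigma> X \<Longrightarrow> (\<forall>x\<in>X. \<sigma> x \<notin> B) \<Longrightarrow>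
    (\<forall>x\<in>X. insert (\<sigma> x) (B - {x}) \<in> M) \<Longrightarrow>
    ((B - X) \<union> \<sigma> ` X \<in> M) \<or>
    (\<exists>W h. W \<subseteq> X \<and> W \<noteq> {} \<and> bij_betw h W W \<and> (\<forall>z\<in>W. h z \<noteq> z \<and> insert (\<sigma> (h z)) (B - {z}) \<in> M))"
proof (induction k arbitrary: X B rule: less_induct)
  case (less k)
  note B = less.prems(2) and finX = less.prems(3) and XB = less.prems(4) and inj = less.prems(5)
    and sB = less.prems(6) and ex = less.prems(7)
  show ?case
  proof (cases "X = {}")
    case True then show ?thesis using B by simp
  next
    case Xne: False
    show ?thesis
    proof (cases "\<exists>x1\<in>X. \<forall>x'\<in>X - {x1}. insert (\<sigma> x') (B - {x1}) \<notin> M")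
      case True
      then obtain x1 where x1: "x1 \<in> X" "\<forall>x'\<in>X - {x1}. insert (\<sigma> x') (B - {x1}) \<notin> M" by blast
      define B1 where "B1 = insert (\<sigma> x1) (B - {x1})"
      have B1: "B1 \<in> M" unfolding B1_def using ex x1 by blast
      define X' where "X' = X - {x1}"
      have equiv: "insert (\<sigma> x) (B1 - {z}) \<in> M \<longleftrightarrow> insert (\<sigma> x) (B - {z}) \<in> M"
        if xX: "x \<in> X'" and zB: "z \<in> B - {x1}" for x z
      proof -
        have sx: "\<sigma> x \<notin> B" using sB xX unfolding X'_def by blast
        have sx1: "\<sigma> x \<noteq> \<sigma> x1" using inj xX x1(1) unfolding X'_def inj_on_def by blast
        have sxB1: "\<sigma> x \<notin> B1" unfolding B1_def using sx sx1 by blast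
        have sub: "Circ M B (\<sigma> x) \<subseteq> insert (\<sigma> x) B1"
        proof
          fix u assume u: "u \<in> Circ M B (\<sigma> x)"
          show "u \<in> insert (\<sigma> x) B1"
          proof (cases "u = \<sigma> x")
            case True then show ?thesis by simp
          next
            case False
            then have "u \<in> B" "insert (\<sigma> x) (B - {u}) \<in> M" using u unfolding Circ_def by auto
            moreover have "u \<noteq> x1" using x1(2) xX calculation(2) unfolding X'_def by blast
            ultimately show ?thesis unfolding B1_def by blast
          qed
        qed
        have ce: "Circ M B1 (\<sigma> x) = Circ M B (\<sigma> x)" using circ_eq[OF m B B1 sx sxB1 sub] .
        have zn: "z \<noteq> \<sigma> x" using zB sx by blast
        have zB1: "z \<in> B1" using zB unfolding B1_def by blast
        have "z \<in> Circ M B1 (\<sigma> x) \<longleftrightarrow> insert (\<sigma> x) (B1 - {z}) \<in> M"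
          unfolding Circ_def using zn zB1 by blast
        moreover have "z \<in> Circ M B (\<sigma> x) \<longleftrightarrow> insert (\<sigma> x) (B - {z}) \<in> M"
          unfolding Circ_def using zn zB by blast
        ultimately show ?thesis using ce by simp
      qed
      have c: "card X' < k" unfolding X'_def using card_Diff1_less[OF finX x1(1)] less.prems(1) by simp
      have X'B1: "X' \<subseteq> B1" unfolding X'_def B1_def using XB by blast
      have inj': "inj_on \<sigma> X'" using inj unfolding X'_def by (rule inj_on_subset) blast
      have sB1: "\<forall>x\<in>X'. \<sigma> x \<notin> B1"
      proof
        fix x assume xX: "x \<in> X'"
        have sx: "\<sigma> x \<notin> B" using sB xX unfolding X'_def by blast
        have sx1: "\<sigma> x \<noteq> \<sigma> x1" using inj xX x1(1) unfolding X'_def inj_on_def by blast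
        show "\<sigma> x \<notin> B1" unfolding B1_def using sx sx1 by blast
      qed
      have ex': "\<forall>x\<in>X'. insert (\<sigma> x) (B1 - {x}) \<in> M"
      proof
        fix x assume xX: "x \<in> X'"
        have "x \<in> B - {x1}" using xX XB unfolding X'_def by blast
        then show "insert (\<sigma> x) (B1 - {x}) \<in> M" using equiv[OF xX] ex xX unfolding X'_def by blast
      qed
      have finX': "finite X'" unfolding X'_def using finX by simp
      have IH: "((B1 - X') \<union> \<sigma> ` X' \<in> M) \<or>
        (\<exists>W h. W \<subseteq> X' \<and> W \<noteq> {} \<and> bij_betw h W W \<and> (\<forall>z\<in>W. h z \<noteq> z \<and> insert (\<sigma> (h z)) (B1 - {z}) \<in> M))"
        using less.IH[OF c refl B1 finX' X'B1 inj' sB1 ex'] .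
      show ?thesis
      proof (cases "(B1 - X') \<union> \<sigma> ` X' \<in> M")
        case True
        have sx1X: "\<sigma> x1 \<notin> X" using sB x1(1) XB by blast
        have "(B1 - X') \<union> \<sigma> ` X' = (B - X) \<union> \<sigma> ` X"
          unfolding B1_def X'_def using sx1X x1(1) by auto
        then show ?thesis using True by simp
      next
        case False
        then obtain W h where Wh: "W \<subseteq> X'" "W \<noteq> {}" "bij_betw h W W"
          "\<forall>z\<in>W. h z \<noteq> z \<and> insert (\<sigma> (h z)) (B1 - {z}) \<in> M" using IH by blast
        have "\<forall>z\<in>W. h z \<noteq> z \<and> insert (\<sigma> (h z)) (B - {z}) \<in> M"
        proof
          fix z assume zW: "z \<in> W"
          have hz: "h z \<in> W" using Wh(3) zW unfolding bij_betw_def by blast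
          have "z \<in> B - {x1}" using zW Wh(1) XB unfolding X'_def by blast
          then show "h z \<noteq> z \<and> insert (\<sigma> (h z)) (B - {z}) \<in> M"
            using equiv[of "h z" z] hz Wh(1) Wh(4) zW by blast
        qed
        then show ?thesis using Wh(1-3) unfolding X'_def by blast
      qed
    next
      case False
      hence ex2: "\<forall>x\<in>X. \<exists>x'. x' \<in> X - {x} \<and> insert (\<sigma> x') (B - {x}) \<in> M" by blast
      define g where "g x = (SOME x'. x' \<in> X - {x} \<and> insert (\<sigma> x') (B - {x}) \<in> M)" for x
      have g: "g x \<in> X - {x} \<and> insert (\<sigma> (g x)) (B - {x}) \<in> M" if "x \<in> X" for x
        unfolding g_def using someI_ex[OF ex2[rule_format, OF that]] .
      have gX: "g ` X \<subseteq> X" using g by blast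
      obtain W where W: "W \<subseteq> X" "W \<noteq> {}" "bij_betw g W W" using periodic[OF finX Xne gX] by blast
      have "\<forall>z\<in>W. g z \<noteq> z \<and> insert (\<sigma> (g z)) (B - {z}) \<in> M" using g W(1) by blast
      then show ?thesis using W by blast
    qed
  qed
qed

lemma um:
  assumes "matroid E M" "B \<in> M" "finite X" "X \<subseteq> B" "inj_on \<sigma> X" "\<forall>x\<in>X. \<sigma> x \<notin> B"
    "\<forall>x\<in>X. insert (\<sigma> x) (B - {x}) \<in> M"
  shows "((B - X) \<union> \<sigma> ` X \<in> M) \<or>
    (\<exists>W h. W \<subseteq> X \<and> W \<noteq> {} \<and> bij_betw h W W \<and> (\<forall>z\<in>W. h z \<noteq> z \<and> insert (\<sigma> (h z)) (B - {z}) \<in> M))"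
  using um_aux[OF assms(1) refl assms(2-7)] .



definition cyc_arcs :: "'a list \<Rightarrow> ('a \<times> 'a) list" where
  "cyc_arcs cs = zip cs (rotate1 cs)"

definition balanced :: "('a \<times> 'a) multiset \<Rightarrow> bool" where
  "balanced F \<longleftrightarrow> image_mset fst F = image_mset snd F"

definition wt :: "('a \<times> 'a \<Rightarrow> 'g::ab_group_add) \<Rightarrow> ('a \<times> 'a) multiset \<Rightarrow> 'g" where
  "wt lab F = sum_mset (image_mset lab F)"

lemma length_cyc_arcs[simp]: "length (cyc_arcs cs) = length cs"
  unfolding cyc_arcs_def by simp

lemma nth_cyc_arcs: "i < length cs \<Longrightarrow> cyc_arcs cs ! i = (cs ! i, cs ! ((i + 1) mod length cs))"
  unfolding cyc_arcs_def using nth_rotate[of i cs 1] by (simp add: add.commute rotate1_rotate_swap)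

lemma mset_rotate1[simp]: "mset (rotate1 xs) = mset xs"
  by (cases xs) simp_all

lemma directed_cycle_iff:
  "directed_cycle A cs \<longleftrightarrow> cs \<noteq> [] \<and> distinct cs \<and> set (cyc_arcs cs) \<subseteq> A"
proof -
  have "set (cyc_arcs cs) \<subseteq> A \<longleftrightarrow> (\<forall>i < length (cyc_arcs cs). cyc_arcs cs ! i \<in> A)"
    by (simp only: subset_eq all_set_conv_all_nth)
  also have "\<dots> \<longleftrightarrow> (\<forall>i < length cs. (cs ! i, cs ! ((i + 1) mod length cs)) \<in> A)"
    by (simp add: nth_cyc_arcs)
  finally show ?thesis unfolding directed_cycle_def by blast
qed

lemma cycle_label_eq: "cycle_label lab cs = wt lab (mset (cyc_arcs cs))"
proof -
  have "wt lab (mset (cyc_arcs cs)) = sum_list (map lab (cyc_arcs cs))"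
    unfolding wt_def by (simp only: sum_mset_sum_list mset_map[symmetric])
  also have "\<dots> = (\<Sum>i<length cs. map lab (cyc_arcs cs) ! i)"
    by (simp add: sum_list_sum_nth atLeast0LessThan)
  also have "\<dots> = cycle_label lab cs"
    unfolding cycle_label_def by (intro sum.cong) (auto simp: nth_cyc_arcs)
  finally show ?thesis by simp
qed

lemma balanced_cyc: "balanced (mset (cyc_arcs cs))"
  unfolding balanced_def cyc_arcs_def
  by (simp add: mset_map[symmetric] del: mset_map)

lemma distinct_cyc: "distinct cs \<Longrightarrow> distinct (cyc_arcs cs)"
  unfolding cyc_arcs_def by (rule distinct_zipI1)

lemma map_fst_cyc: "map fst (cyc_arcs cs) = cs"
  unfolding cyc_arcs_def by simp

lemma map_snd_cyc: "map snd (cyc_arcs cs) = rotate1 cs"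
  unfolding cyc_arcs_def by simp

lemma balanced_plus: "balanced F \<Longrightarrow> balanced G \<Longrightarrow> balanced (F + G)"
  unfolding balanced_def by simp

lemma balanced_diff: "G \<subseteq># F \<Longrightarrow> balanced F \<Longrightarrow> balanced G \<Longrightarrow> balanced (F - G)"
  unfolding balanced_def by (simp add: image_mset_Diff)

lemma wt_plus: "wt lab (F + G) = wt lab F + wt lab G"
  unfolding wt_def by simp

lemma wt_diff: "G \<subseteq># F \<Longrightarrow> wt lab (F - G) = wt lab F - wt lab G"
proof -
  assume a: "G \<subseteq># F"
  have "wt lab F = wt lab ((F - G) + G)" using subset_mset.diff_add[OF a] by simp
  also have "\<dots> = wt lab (F - G) + wt lab G" by (rule wt_plus)
  finally show ?thesis by (simp add: eq_diff_eq)
qed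

lemma distinct_mset_sub:
  assumes "distinct xs" "set xs \<subseteq> set_mset F"
  shows "mset xs \<subseteq># F"
proof (rule mset_subset_eqI)
  fix a
  have e: "mset xs = mset_set (set xs)" using mset_set_set[OF assms(1)] by simp
  show "count (mset xs) a \<le> count F a"
  proof (cases "a \<in> set xs")
    case True
    then have "count (mset xs) a = 1" unfolding e by simp
    moreover have "a \<in># F" using True assms(2) by blast
    hence "count F a \<ge> 1" by (simp add: Suc_le_eq)
    ultimately show ?thesis by simp
  next
    case False then have "count (mset xs) a = 0" by (simp add: count_list_0_iff)
    then show ?thesis by (metis le0)
  qed
qed

lemma cyc_vertex_wt:
  assumes "distinct cs" "\<forall>a\<in>set (cyc_arcs cs). lab a = w (snd a)"
  shows "wt lab (mset (cyc_arcs cs)) = sum w (set cs)"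
proof -
  have "wt lab (mset (cyc_arcs cs)) = sum_list (map lab (cyc_arcs cs))"
    unfolding wt_def by (simp only: sum_mset_sum_list mset_map[symmetric])
  also have "\<dots> = sum_list (map (w \<circ> snd) (cyc_arcs cs))"
    using assms(2) by (intro arg_cong[where f = sum_list] map_cong) auto
  also have "\<dots> = sum_list (map w (rotate1 cs))"
    by (simp add: map_snd_cyc[symmetric])
  also have "\<dots> = sum_list (map w cs)"
    by (cases cs) (simp_all add: add.commute)
  also have "\<dots> = sum w (set cs)" using assms(1) by (rule sum_list_distinct_conv_sum_set)
  finally show ?thesis .
qed

lemma extract_cyc:
  assumes bal: "balanced F" and ne: "F \<noteq> {#}"
  shows "\<exists>cs. cs \<noteq> [] \<and> distinct cs \<and> mset (cyc_arcs cs) \<subseteq># F"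
proof -
  obtain a0 where a0: "a0 \<in># F" using ne by (metis set_mset_eq_empty_iff ex_in_conv)
  define T where "T = set_mset (image_mset snd F)"
  have finT: "finite T" unfolding T_def by simp
  have out: "\<exists>u. (v, u) \<in># F" if "v \<in> T" for v
  proof -
    have "v \<in> set_mset (image_mset fst F)" using that bal unfolding T_def balanced_def by simp
    then obtain a where "a \<in># F" "fst a = v" by auto
    then show ?thesis by (metis prod.collapse)
  qed
  define s where "s v = (SOME u. (v, u) \<in># F)" for v
  have sF: "(v, s v) \<in># F" if "v \<in> T" for v
    unfolding s_def using someI_ex[OF out[OF that]] .
  have sT: "s v \<in> T" if "v \<in> T" for v
    using sF[OF that] unfolding T_def by force
  define v where "v i = (s ^^ i) (snd a0)" for i
  have vT: "v i \<in> T" for i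
  proof (induction i)
    case 0 then show ?case unfolding v_def T_def using a0 by simp
  next
    case (Suc i) then show ?case unfolding v_def using sT by simp
  qed
  have vF: "(v i, v (Suc i)) \<in># F" for i
    using sF[OF vT[of i]] unfolding v_def by simp
  have "\<not> inj_on v {..card T}"
  proof
    assume inj: "inj_on v {..card T}"
    have "v ` {..card T} \<subseteq> T" using vT by blast
    hence "card (v ` {..card T}) \<le> card T" using finT by (intro card_mono) auto
    moreover have "card (v ` {..card T}) = Suc (card T)" using card_image[OF inj] by simp
    ultimately show False by simp
  qed
  then obtain i j where "i \<noteq> j" "v i = v j" unfolding inj_on_def by blast
  then have ex: "\<exists>j. \<exists>i<j. v i = v j" by (metis linorder_neqE_nat)
  define J where "J = (LEAST j. \<exists>i<j. v i = v j)"
  have "\<exists>i<J. v i = v J" unfolding J_def using LeastI_ex[OF ex] .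
  then obtain I where I: "I < J" "v I = v J" by blast
  have mind: "v p \<noteq> v q" if "p < q" "q < J" for p q
  proof
    assume "v p = v q"
    hence "J \<le> q" unfolding J_def using that(1) by (intro Least_le) blast
    then show False using that(2) by simp
  qed
  define L where "L = J - I"
  define cs where "cs = map (\<lambda>t. v (I + t)) [0..<L]"
  have len: "length cs = L" unfolding cs_def by simp
  have Lpos: "L > 0" unfolding L_def using I by simp
  have csne: "cs \<noteq> []" using len Lpos by auto
  have csn: "cs ! k = v (I + k)" if "k < L" for k unfolding cs_def using that by simp
  have dist: "distinct cs"
    unfolding cs_def distinct_map
  proof
    show "inj_on (\<lambda>t. v (I + t)) (set [0..<L])"
    proof (rule inj_onI)
      fix t1 t2 assume t1: "t1 \<in> set [0..<L]" and t2: "t2 \<in> set [0..<L]" and e: "v (I + t1) = v (I + t2)"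
      have b1: "I + t1 < J" using t1 I(1) unfolding L_def by auto
      have b2: "I + t2 < J" using t2 I(1) unfolding L_def by auto
      show "t1 = t2"
      proof (rule ccontr)
        assume "t1 \<noteq> t2"
        then consider "t1 < t2" | "t2 < t1" by linarith
        then show False
        proof cases
          case 1 then show False using mind[of "I + t1" "I + t2"] e b2 by simp
        next
          case 2 then show False using mind[of "I + t2" "I + t1"] e b1 by simp
        qed
      qed
    qed
  qed simp
  have arcs: "\<forall>k < length (cyc_arcs cs). cyc_arcs cs ! k \<in># F"
  proof (intro allI impI)
    fix k assume "k < length (cyc_arcs cs)"
    hence k: "k < L" using len by simp
    have e: "cyc_arcs cs ! k = (v (I + k), cs ! ((k + 1) mod L))" using nth_cyc_arcs[of k cs] k len csn by simp
    show "cyc_arcs cs ! k \<in># F"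
    proof (cases "k + 1 < L")
      case True
      then have "cs ! ((k + 1) mod L) = v (Suc (I + k))" using csn by simp
      then show ?thesis using e vF by simp
    next
      case False
      then have "k + 1 = L" using k by simp
      then have j: "Suc (I + k) = J" using I(1) unfolding L_def by linarith
      have "cs ! ((k + 1) mod L) = cs ! 0" using \<open>k + 1 = L\<close> by simp
      also have "\<dots> = v I" using csn[of 0] Lpos by simp
      finally have "cs ! ((k + 1) mod L) = v (Suc (I + k))" using j I(2) by simp
      then show ?thesis using e vF by simp
    qed
  qed
  have "set (cyc_arcs cs) \<subseteq> set_mset F"
    using arcs by (simp only: subset_eq all_set_conv_all_nth)
  then have "mset (cyc_arcs cs) \<subseteq># F" using distinct_mset_sub[OF distinct_cyc[OF dist]] by blast
  then show ?thesis using csne dist by blast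
qed

lemma size_cyc[simp]: "size (mset (cyc_arcs cs)) = length cs"
  by simp

lemma La:
  assumes hyp: "\<forall>cs. cs \<noteq> [] \<and> distinct cs \<and> set (cyc_arcs cs) \<subseteq> A \<and> length cs < n \<longrightarrow> wt lab (mset (cyc_arcs cs)) = 0"
  shows "balanced F \<Longrightarrow> set_mset F \<subseteq> A \<Longrightarrow> size F < n \<Longrightarrow> wt lab F = 0"
proof (induction "size F" arbitrary: F rule: less_induct)
  case less
  show ?case
  proof (cases "F = {#}")
    case True then show ?thesis by (simp add: wt_def)
  next
    case False
    obtain cs where cs: "cs \<noteq> []" "distinct cs" "mset (cyc_arcs cs) \<subseteq># F"
      using extract_cyc[OF less.prems(1) False] by blast
    let ?G = "mset (cyc_arcs cs)"
    have sGF: "set (cyc_arcs cs) \<subseteq> set_mset F" using set_mset_mono[OF cs(3)] by simp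
    have sG: "set (cyc_arcs cs) \<subseteq> A" using sGF less.prems(2) by blast
    have lenG: "length cs \<le> size F" using size_mset_mono[OF cs(3)] by simp
    have wG: "wt lab ?G = 0" using hyp cs sG lenG less.prems(3) by auto
    have lpos: "length cs > 0" using cs(1) by simp
    have "size (F - ?G) = size F - length cs" using size_Diff_submset[OF cs(3)] by simp
    hence sz: "size (F - ?G) < size F" using lenG lpos by linarith
    have bal: "balanced (F - ?G)" using balanced_diff[OF cs(3) less.prems(1) balanced_cyc] .
    have sA: "set_mset (F - ?G) \<subseteq> A" using less.prems(2) by (meson in_diffD subset_iff)
    have "wt lab (F - ?G) = 0" using less.hyps[OF sz bal sA] sz less.prems(3) by simp
    then show ?thesis using wt_diff[OF cs(3), of lab] wG by simp
  qed
qed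

lemma Lb:
  assumes hyp: "\<forall>cs. cs \<noteq> [] \<and> distinct cs \<and> set (cyc_arcs cs) \<subseteq> A \<and> length cs < n \<longrightarrow> wt lab (mset (cyc_arcs cs)) = 0"
    and wA: "\<forall>a\<in>A. lab a = w (snd a)" and finV: "finite V" and cardV: "card V = n"
  shows "balanced F \<Longrightarrow> set_mset F \<subseteq> A \<Longrightarrow> fst ` set_mset F \<subseteq> V \<Longrightarrow> size F < 2 * n \<Longrightarrow>
    wt lab F = 0 \<or> wt lab F = sum w V"
proof (induction "size F" arbitrary: F rule: less_induct)
  case less
  show ?case
  proof (cases "F = {#}")
    case True then show ?thesis by (simp add: wt_def)
  next
    case False
    obtain cs where cs: "cs \<noteq> []" "distinct cs" "mset (cyc_arcs cs) \<subseteq># F"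
      using extract_cyc[OF less.prems(1) False] by blast
    let ?G = "mset (cyc_arcs cs)"
    have sGF: "set (cyc_arcs cs) \<subseteq> set_mset F" using set_mset_mono[OF cs(3)] by simp
    have sG: "set (cyc_arcs cs) \<subseteq> A" using sGF less.prems(2) by blast
    have "set cs = fst ` set (cyc_arcs cs)" using map_fst_cyc[of cs] by (metis set_map)
    hence csV: "set cs \<subseteq> V" using sGF less.prems(3) by blast
    have lenV: "length cs \<le> n" using card_mono[OF finV csV] distinct_card[OF cs(2)] cardV by simp
    have lenG: "length cs \<le> size F" using size_mset_mono[OF cs(3)] by simp
    have lpos: "length cs > 0" using cs(1) by simp
    have "size (F - ?G) = size F - length cs" using size_Diff_submset[OF cs(3)] by simp
    hence sz: "size (F - ?G) < size F" using lenG lpos by linarith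
    have bal: "balanced (F - ?G)" using balanced_diff[OF cs(3) less.prems(1) balanced_cyc] .
    have sA: "set_mset (F - ?G) \<subseteq> A" using less.prems(2) by (meson in_diffD subset_iff)
    have sV: "fst ` set_mset (F - ?G) \<subseteq> V" using less.prems(3) by (meson image_mono in_diffD subset_iff)
    have szG: "size (F - ?G) = size F - length cs" using size_Diff_submset[OF cs(3)] by simp
    show ?thesis
    proof (cases "length cs < n")
      case True
      have wG: "wt lab ?G = 0" using hyp cs sG True by auto
      have "wt lab (F - ?G) = 0 \<or> wt lab (F - ?G) = sum w V"
        using less.hyps[OF sz bal sA sV] sz less.prems(4) by simp
      then show ?thesis using wt_diff[OF cs(3), of lab] wG by auto
    next
      case False
      hence "length cs = n" using lenV by simp
      hence "card (set cs) = card V" using distinct_card[OF cs(2)] cardV by simp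
      hence "set cs = V" using card_subset_eq[OF finV csV] by simp
      moreover have "wt lab ?G = sum w (set cs)"
        using cyc_vertex_wt[OF cs(2)] wA sG by blast
      ultimately have wG: "wt lab ?G = sum w V" by simp
      have "size (F - ?G) < n" using szG less.prems(4) \<open>length cs = n\<close> by simp
      hence "wt lab (F - ?G) = 0" using La[OF hyp bal sA] by blast
      then show ?thesis using wt_diff[OF cs(3), of lab] wG by simp
    qed
  qed
qed

lemma zip_tl_snoc: "zs \<noteq> [] \<Longrightarrow> zip zs (tl zs @ [x]) = zip zs (tl zs) @ [(last zs, x)]"
proof (induction zs)
  case Nil then show ?case by simp
next
  case (Cons z zs)
  show ?case
  proof (cases "zs = []")
    case True then show ?thesis by simp
  next
    case False
    have "zip (z # zs) (tl (z # zs) @ [x]) = (z, hd zs) # zip zs (tl zs @ [x])"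
      using False by (cases zs) auto
    also have "\<dots> = (z, hd zs) # zip zs (tl zs) @ [(last zs, x)]" using Cons.IH[OF False] by simp
    moreover have "(z, hd zs) # zip zs (tl zs) = zip (z # zs) (tl (z # zs))"
      using False by (cases zs) auto
    ultimately show ?thesis using False by simp
  qed
qed

lemma cyc_arcs_cons: "ys \<noteq> [] \<Longrightarrow> cyc_arcs (x # ys) = (x, hd ys) # zip ys (tl ys) @ [(last ys, x)]"
proof -
  assume ne: "ys \<noteq> []"
  have "cyc_arcs (x # ys) = zip (x # ys) (ys @ [x])" unfolding cyc_arcs_def by simp
  also have "\<dots> = (x, hd ys) # zip ys (tl ys @ [x])" using ne by (cases ys) auto
  also have "\<dots> = (x, hd ys) # zip ys (tl ys) @ [(last ys, x)]" using zip_tl_snoc[OF ne] by simp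
  finally show ?thesis .
qed

lemma zip_rotate1: "length xs = length ys \<Longrightarrow> zip (rotate1 xs) (rotate1 ys) = rotate1 (zip xs ys)"
  by (cases xs; cases ys) auto

lemma zip_rotate: "length xs = length ys \<Longrightarrow> zip (rotate n xs) (rotate n ys) = rotate n (zip xs ys)"
  by (induction n) (simp_all add: zip_rotate1)

lemma set_cyc_rotate: "set (cyc_arcs (rotate n cs)) = set (cyc_arcs cs)"
proof -
  have "cyc_arcs (rotate n cs) = zip (rotate n cs) (rotate n (rotate1 cs))"
    unfolding cyc_arcs_def by (simp add: rotate1_rotate_swap)
  also have "\<dots> = rotate n (cyc_arcs cs)" unfolding cyc_arcs_def by (simp add: zip_rotate)
  finally show ?thesis by simp
qed

lemma core0:
  fixes w :: "'a \<Rightarrow> 'g::ab_group_add"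
  assumes no2: "\<forall>g::'g. g + g = 0 \<longrightarrow> g = 0"
    and irr: "\<forall>v. (v, v) \<notin> A" and wA: "\<forall>a\<in>A. lab a = w (snd a)"
    and csne: "cs \<noteq> []" and dcs: "distinct cs" and csA: "set (cyc_arcs cs) \<subseteq> A"
    and nz: "sum w (set cs) \<noteq> 0"
    and hyp: "\<forall>ds. ds \<noteq> [] \<and> distinct ds \<and> set (cyc_arcs ds) \<subseteq> A \<and> length ds < length cs \<longrightarrow> wt lab (mset (cyc_arcs ds)) = 0"
    and f: "\<forall>v\<in>set cs. f v \<in> set cs \<and> (v, f v) \<in> A" and inj: "inj_on f (set cs)"
    and bad: "(hd cs, f (hd cs)) \<notin> set (cyc_arcs cs)"
  shows False
proof -
  define n where "n = length cs"
  define V where "V = set cs"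
  obtain x ys where cs: "cs = x # ys" using csne by (cases cs) auto
  have xV: "x \<in> V" unfolding V_def cs by simp
  have ysne: "ys \<noteq> []"
  proof
    assume "ys = []"
    then have "(x, x) \<in> set (cyc_arcs cs)" unfolding cs cyc_arcs_def by simp
    then show False using csA irr by blast
  qed
  have ca: "cyc_arcs cs = (x, hd ys) # zip ys (tl ys) @ [(last ys, x)]"
    unfolding cs using cyc_arcs_cons[OF ysne] .
  have fx: "f x \<in> set cs" "(x, f x) \<in> A" using f xV unfolding V_def by auto
  have "f x \<noteq> x" using fx(2) irr by metis
  hence "f x \<in> set ys" using fx(1) cs by simp
  then obtain p where p: "p < length ys" "ys ! p = f x" by (metis in_set_conv_nth)
  have "p \<noteq> 0"
  proof
    assume "p = 0"
    hence "f x = hd ys" using p ysne by (simp add: hd_conv_nth)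
    hence "(x, f x) \<in> set (cyc_arcs cs)" using ca by simp
    then show False using bad cs by simp
  qed
  define zs where "zs = drop p ys"
  define C0 where "C0 = x # zs"
  have zsne: "zs \<noteq> []" unfolding zs_def using p by simp
  have hdzs: "hd zs = f x" unfolding zs_def using p by (simp add: hd_drop_conv_nth)
  have lastzs: "last zs = last ys" unfolding zs_def using p by simp
  have tlzs: "zip zs (tl zs) = drop p (zip ys (tl ys))"
    unfolding zs_def by (simp add: drop_zip tl_drop)
  have cC0: "cyc_arcs C0 = (x, f x) # drop p (zip ys (tl ys)) @ [(last ys, x)]"
    unfolding C0_def using cyc_arcs_cons[OF zsne, of x] hdzs lastzs tlzs by simp
  have sC0: "set (cyc_arcs C0) \<subseteq> insert (x, f x) (set (cyc_arcs cs))"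
    unfolding cC0 ca using set_drop_subset[of p "zip ys (tl ys)"] by auto
  have lenC0: "length C0 < n" unfolding C0_def zs_def n_def cs using p \<open>p \<noteq> 0\<close> by simp
  have dC0: "distinct C0" unfolding C0_def zs_def using dcs cs by (auto dest: in_set_dropD)
  define H where "H = mset (map (\<lambda>v. (v, f v)) cs)"
  define F where "F = mset (cyc_arcs cs) + H"
  have finV: "finite V" unfolding V_def by simp
  have fV: "f ` V = V" using endo_inj_surj[OF finV] f inj unfolding V_def by blast
  have balH: "balanced H"
  proof -
    have "image_mset fst H = mset cs" unfolding H_def by (simp only: mset_map[symmetric] map_map) (simp add: comp_def)
    moreover have "image_mset snd H = mset (map f cs)" unfolding H_def by (simp only: mset_map[symmetric] map_map) (simp add: comp_def)
    moreover have "mset (map f cs) = mset cs"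
    proof -
      have "distinct (map f cs)" using dcs inj unfolding V_def by (simp add: distinct_map)
      moreover have "set (map f cs) = set cs" using fV unfolding V_def by simp
      ultimately show ?thesis using set_eq_iff_mset_eq_distinct dcs by blast
    qed
    ultimately show ?thesis unfolding balanced_def by simp
  qed
  have balF: "balanced F" unfolding F_def using balanced_plus[OF balanced_cyc balH] .
  have HA: "set_mset H \<subseteq> A" unfolding H_def using f by auto
  have FA: "set_mset F \<subseteq> A" unfolding F_def using HA csA by auto
  have FV: "fst ` set_mset F \<subseteq> V"
  proof -
    have "fst ` set (cyc_arcs cs) = set cs" using map_fst_cyc[of cs] by (metis set_map)
    moreover have "fst ` set_mset H = set cs" unfolding H_def by (simp add: image_image)
    ultimately show ?thesis unfolding F_def V_def by auto
  qed
  have sF: "set (cyc_arcs C0) \<subseteq> set_mset F"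
  proof -
    have "(x, f x) \<in> set_mset H" unfolding H_def cs by simp
    then show ?thesis using sC0 unfolding F_def by auto
  qed
  define G where "G = mset (cyc_arcs C0)"
  have GF: "G \<subseteq># F" unfolding G_def using distinct_mset_sub[OF distinct_cyc[OF dC0] sF] .
  have C0A: "set (cyc_arcs C0) \<subseteq> A" using sF FA by blast
  have wG: "wt lab G = 0" unfolding G_def using hyp dC0 C0A lenC0 unfolding C0_def n_def by auto
  have wcs: "wt lab (mset (cyc_arcs cs)) = sum w V"
    unfolding V_def using cyc_vertex_wt[OF dcs] wA csA by blast
  have wH: "wt lab H = sum w V"
  proof -
    have "wt lab H = sum_list (map (\<lambda>v. lab (v, f v)) cs)"
      unfolding wt_def H_def by (simp only: sum_mset_sum_list mset_map[symmetric] map_map comp_def)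
    also have "\<dots> = sum_list (map (\<lambda>v. w (f v)) cs)"
      using f wA by (intro arg_cong[where f = sum_list] map_cong) auto
    also have "\<dots> = sum (\<lambda>v. w (f v)) V" unfolding V_def using sum_list_distinct_conv_sum_set[OF dcs] by simp
    also have "\<dots> = sum w (f ` V)" using sum.reindex[of f V w] inj unfolding V_def by simp
    finally show ?thesis using fV by simp
  qed
  have wF: "wt lab F = sum w V + sum w V" unfolding F_def using wt_plus[of lab "mset (cyc_arcs cs)" H] wcs wH by simp
  have balF': "balanced (F - G)" using balanced_diff[OF GF balF] unfolding G_def using balanced_cyc by blast
  have F'A: "set_mset (F - G) \<subseteq> A" using FA by (meson in_diffD subset_iff)
  have F'V: "fst ` set_mset (F - G) \<subseteq> V" using FV by (meson image_mono in_diffD subset_iff)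
  have szF: "size F = 2 * n" unfolding F_def H_def n_def by simp
  have szG: "size G > 0" unfolding G_def C0_def by simp
  have "size (F - G) < 2 * n" using size_Diff_submset[OF GF] szF szG size_mset_mono[OF GF] by linarith
  moreover have cV: "card V = n" unfolding V_def n_def using distinct_card[OF dcs] .
  have hyp': "\<forall>ds. ds \<noteq> [] \<and> distinct ds \<and> set (cyc_arcs ds) \<subseteq> A \<and> length ds < n \<longrightarrow> wt lab (mset (cyc_arcs ds)) = 0"
    using hyp unfolding n_def .
  ultimately have "wt lab (F - G) = 0 \<or> wt lab (F - G) = sum w V"
    using Lb[OF hyp' wA finV cV balF' F'A F'V] by blast
  moreover have "wt lab (F - G) = sum w V + sum w V" using wt_diff[OF GF, of lab] wF wG by simp
  ultimately have "sum w V + sum w V = 0 \<or> sum w V + sum w V = sum w V" by simp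
  hence "sum w V = 0"
  proof
    assume "sum w V + sum w V = 0" then show ?thesis using no2 by blast
  next
    assume "sum w V + sum w V = sum w V" then show ?thesis by (simp add: add_cancel_left_left)
  qed
  then show False using nz unfolding V_def by simp
qed

lemma core:
  fixes w :: "'a \<Rightarrow> 'g::ab_group_add"
  assumes no2: "\<forall>g::'g. g + g = 0 \<longrightarrow> g = 0"
    and irr: "\<forall>v. (v, v) \<notin> A" and wA: "\<forall>a\<in>A. lab a = w (snd a)"
    and csne: "cs \<noteq> []" and dcs: "distinct cs" and csA: "set (cyc_arcs cs) \<subseteq> A"
    and nz: "sum w (set cs) \<noteq> 0"
    and hyp: "\<forall>ds. ds \<noteq> [] \<and> distinct ds \<and> set (cyc_arcs ds) \<subseteq> A \<and> length ds < length cs \<longrightarrow> wt lab (mset (cyc_arcs ds)) = 0"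
    and f: "\<forall>v\<in>set cs. f v \<in> set cs \<and> (v, f v) \<in> A" and inj: "inj_on f (set cs)"
    and bad: "v0 \<in> set cs" "(v0, f v0) \<notin> set (cyc_arcs cs)"
  shows False
proof -
  obtain p where p: "p < length cs" "cs ! p = v0" using bad(1) by (metis in_set_conv_nth)
  define ds where "ds = rotate p cs"
  have dsne: "ds \<noteq> []" unfolding ds_def using csne by simp
  have dds: "distinct ds" unfolding ds_def using dcs by simp
  have sds: "set ds = set cs" unfolding ds_def by simp
  have lds: "length ds = length cs" unfolding ds_def by simp
  have cds: "set (cyc_arcs ds) = set (cyc_arcs cs)" unfolding ds_def by (rule set_cyc_rotate)
  have hd: "hd ds = v0" unfolding ds_def using p csne by (simp add: hd_rotate_conv_nth)
  have a1: "set (cyc_arcs ds) \<subseteq> A" using cds csA by simp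
  have a2: "sum w (set ds) \<noteq> 0" using sds nz by simp
  have a3: "\<forall>es. es \<noteq> [] \<and> distinct es \<and> set (cyc_arcs es) \<subseteq> A \<and> length es < length ds \<longrightarrow> wt lab (mset (cyc_arcs es)) = 0"
    using hyp lds by simp
  have a4: "\<forall>v\<in>set ds. f v \<in> set ds \<and> (v, f v) \<in> A" using f sds by simp
  have a5: "inj_on f (set ds)" using inj sds by simp
  have a6: "(hd ds, f (hd ds)) \<notin> set (cyc_arcs ds)" using hd cds bad(2) by simp
  show False by (rule core0[OF no2 irr wA dsne dds a1 a2 a3 a4 a5 a6])
qed



lemma arc_first: "(u, v) \<in> exch_arcs E M1 M2 B \<Longrightarrow> u \<in> B \<Longrightarrow> v \<in> E - B \<and> insert v (B - {u}) \<in> M1"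
  unfolding exch_arcs_def by auto

lemma arc_second: "(u, v) \<in> exch_arcs E M1 M2 B \<Longrightarrow> u \<notin> B \<Longrightarrow> v \<in> B \<and> u \<in> E - B \<and> insert u (B - {v}) \<in> M2"
  unfolding exch_arcs_def by auto

lemma first_arc: "u \<in> B \<Longrightarrow> v \<in> E - B \<Longrightarrow> insert v (B - {u}) \<in> M1 \<Longrightarrow> (u, v) \<in> exch_arcs E M1 M2 B"
  unfolding exch_arcs_def by auto

lemma second_arc: "x \<in> B \<Longrightarrow> y \<in> E - B \<Longrightarrow> insert y (B - {x}) \<in> M2 \<Longrightarrow> (y, x) \<in> exch_arcs E M1 M2 B"
  unfolding exch_arcs_def by auto

lemma arc_irr: "(v, v) \<notin> exch_arcs E M1 M2 B"
  unfolding exch_arcs_def by auto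

lemma arc_lab: "a \<in> exch_arcs E M1 M2 B \<Longrightarrow> arc_label \<psi> B a = (\<lambda>v. if v \<in> B then - \<psi> v else \<psi> v) (snd a)"
  unfolding exch_arcs_def arc_label_def by auto

lemma arc_E: "(u, v) \<in> exch_arcs E M1 M2 B \<Longrightarrow> B \<subseteq> E \<Longrightarrow> u \<in> E \<and> v \<in> E"
  unfolding exch_arcs_def by auto

lemma forward_dir:
  fixes \<psi> :: "'a \<Rightarrow> 'g::ab_group_add"
  assumes m1: "matroid E M1" and m2: "matroid E M2" and B01: "B0 \<in> M1" and B02: "B0 \<in> M2"
    and z: "(\<Sum>x\<in>B0. \<psi> x) = 0"
    and Bs1: "Bs \<in> M1" and Bs2: "Bs \<in> M2" and nz: "(\<Sum>x\<in>Bs. \<psi> x) \<noteq> 0"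
  shows "\<exists>C. directed_cycle (exch_arcs E M1 M2 B0) C \<and> cycle_label (arc_label \<psi> B0) C \<noteq> 0"
proof -
  define A where "A = exch_arcs E M1 M2 B0"
  define lab where "lab = arc_label \<psi> B0"
  define w where "w v = (if v \<in> B0 then - \<psi> v else \<psi> v)" for v
  have wA: "\<forall>a\<in>A. lab a = w (snd a)" unfolding A_def lab_def w_def using arc_lab by blast
  obtain \<sigma>1 where s1: "bij_betw \<sigma>1 (B0 - Bs) (Bs - B0)" "\<forall>x\<in>B0 - Bs. insert (\<sigma>1 x) (B0 - {x}) \<in> M1"
    using bij_exch[OF m1 B01 Bs1] by blast
  obtain \<sigma>2 where s2: "bij_betw \<sigma>2 (B0 - Bs) (Bs - B0)" "\<forall>x\<in>B0 - Bs. insert (\<sigma>2 x) (B0 - {x}) \<in> M2"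
    using bij_exch[OF m2 B02 Bs2] by blast
  define X where "X = B0 - Bs"
  define Y where "Y = Bs - B0"
  define S where "S = X \<union> Y"
  have finB0: "finite B0" using matroid_finite[OF m1 B01] .
  have finBs: "finite Bs" using matroid_finite[OF m1 Bs1] .
  have BsE: "Bs \<subseteq> E" using matroid_sub[OF m1 Bs1] .
  have finS: "finite S" unfolding S_def X_def Y_def using finB0 finBs by simp
  define \<tau> where "\<tau> = inv_into X \<sigma>2"
  have bt: "bij_betw \<tau> Y X" unfolding \<tau>_def X_def Y_def using s2(1) by (rule bij_betw_inv_into)
  have st: "\<sigma>2 (\<tau> y) = y" if "y \<in> Y" for y
    unfolding \<tau>_def using that s2(1) unfolding X_def Y_def by (meson bij_betw_inv_into_right)
  define f where "f v = (if v \<in> B0 then \<sigma>1 v else \<tau> v)" for v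
  have fX: "f x \<in> Y \<and> (x, f x) \<in> A" if "x \<in> X" for x
  proof -
    have "f x = \<sigma>1 x" using that unfolding f_def X_def by simp
    moreover have "\<sigma>1 x \<in> Y" using s1(1) that unfolding X_def Y_def bij_betw_def by blast
    moreover have "(x, \<sigma>1 x) \<in> A"
    proof -
      have x0: "x \<in> B0" using that unfolding X_def by blast
      have yE: "\<sigma>1 x \<in> E - B0" using \<open>\<sigma>1 x \<in> Y\<close> BsE unfolding Y_def by blast
      have i: "insert (\<sigma>1 x) (B0 - {x}) \<in> M1" using s1(2) that unfolding X_def by blast
      show ?thesis unfolding A_def by (rule first_arc[OF x0 yE i])
    qed
    ultimately show ?thesis by simp
  qed
  have fY: "f y \<in> X \<and> (y, f y) \<in> A" if "y \<in> Y" for y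
  proof -
    have "f y = \<tau> y" using that unfolding f_def Y_def by simp
    moreover have tX: "\<tau> y \<in> X" using bt that unfolding bij_betw_def by blast
    moreover have "(y, \<tau> y) \<in> A"
    proof -
      have "insert (\<sigma>2 (\<tau> y)) (B0 - {\<tau> y}) \<in> M2" using s2(2) tX unfolding X_def by blast
      hence i: "insert y (B0 - {\<tau> y}) \<in> M2" using st[OF that] by simp
      have t0: "\<tau> y \<in> B0" using tX unfolding X_def by blast
      have yE: "y \<in> E - B0" using that BsE unfolding Y_def by blast
      show ?thesis unfolding A_def by (rule second_arc[OF t0 yE i])
    qed
    ultimately show ?thesis by simp
  qed
  have XY: "X \<inter> Y = {}" unfolding X_def Y_def by blast
  have i1: "inj_on \<sigma>1 X" using s1(1) unfolding X_def bij_betw_def by blast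
  have i2: "inj_on \<tau> Y" using bt unfolding bij_betw_def by blast
  have fXe: "f x = \<sigma>1 x" if "x \<in> X" for x using that unfolding f_def X_def by simp
  have fYe: "f y = \<tau> y" if "y \<in> Y" for y using that unfolding f_def Y_def by simp
  have injf: "inj_on f S"
  proof (rule inj_onI)
    fix a b assume a: "a \<in> S" and b: "b \<in> S" and e: "f a = f b"
    show "a = b"
    proof (cases "a \<in> X")
      case aX: True
      show ?thesis
      proof (cases "b \<in> X")
        case True
        then have "\<sigma>1 a = \<sigma>1 b" using aX e fXe by simp
        then show ?thesis using i1 aX True unfolding inj_on_def by blast
      next
        case False
        then have bY: "b \<in> Y" using b unfolding S_def by blast
        have "f a \<in> Y" using fX[OF aX] by blast
        moreover have "f a \<in> X" using fY[OF bY] e by simp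
        ultimately show ?thesis using XY by blast
      qed
    next
      case False
      then have aY: "a \<in> Y" using a unfolding S_def by blast
      show ?thesis
      proof (cases "b \<in> X")
        case True
        have "f b \<in> Y" using fX[OF True] by blast
        moreover have "f b \<in> X" using fY[OF aY] e by simp
        ultimately show ?thesis using XY by blast
      next
        case False
        then have bY: "b \<in> Y" using b unfolding S_def by blast
        then have "\<tau> a = \<tau> b" using aY e fYe by simp
        then show ?thesis using i2 aY bY unfolding inj_on_def by blast
      qed
    qed
  qed
  have fS: "f ` S \<subseteq> S" unfolding S_def using fX fY by blast
  have fSS: "f ` S = S" using endo_inj_surj[OF finS fS injf] .
  have arcsA: "(v, f v) \<in> A" if "v \<in> S" for v using that fX fY unfolding S_def by blast
  define H where "H = image_mset (\<lambda>v. (v, f v)) (mset_set S)"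
  have balH: "balanced H"
  proof -
    have "image_mset fst H = mset_set S" unfolding H_def by (simp add: image_mset.compositionality comp_def)
    moreover have "image_mset snd H = image_mset f (mset_set S)" unfolding H_def by (simp add: image_mset.compositionality comp_def)
    moreover have "image_mset f (mset_set S) = mset_set S" using image_mset_mset_set[OF injf] fSS by simp
    ultimately show ?thesis unfolding balanced_def by simp
  qed
  have HA: "set_mset H \<subseteq> A" unfolding H_def using arcsA finS by auto
  have wH: "wt lab H = sum w S"
  proof -
    have "wt lab H = sum (\<lambda>v. lab (v, f v)) S"
      unfolding wt_def H_def by (simp add: image_mset.compositionality comp_def sum_unfold_sum_mset)
    also have "\<dots> = sum (\<lambda>v. w (f v)) S" using wA arcsA by (intro sum.cong) auto
    also have "\<dots> = sum w (f ` S)" using sum.reindex[OF injf, of w] by simp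
    finally show ?thesis using fSS by simp
  qed
  have "sum w S = sum w X + sum w Y" unfolding S_def using XY finS
    by (intro sum.union_disjoint) (auto simp: S_def)
  also have "sum w X = - sum \<psi> X" unfolding w_def X_def by (simp add: sum_negf)
  also have "sum w Y = sum \<psi> Y" unfolding w_def Y_def by simp
  finally have wS: "sum w S = sum \<psi> Y - sum \<psi> X" by simp
  have "sum \<psi> Bs = sum \<psi> (Bs \<inter> B0) + sum \<psi> Y" unfolding Y_def using finBs by (rule sum.Int_Diff)
  moreover have "sum \<psi> B0 = sum \<psi> (B0 \<inter> Bs) + sum \<psi> X" unfolding X_def using finB0 by (rule sum.Int_Diff)
  moreover have "B0 \<inter> Bs = Bs \<inter> B0" by blast
  ultimately have "sum \<psi> Bs = sum \<psi> Y - sum \<psi> X" using z by (simp add: algebra_simps)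
  hence "wt lab H \<noteq> 0" using wH wS nz by simp
  have "\<exists>cs. cs \<noteq> [] \<and> distinct cs \<and> set (cyc_arcs cs) \<subseteq> A \<and> wt lab (mset (cyc_arcs cs)) \<noteq> 0"
  proof (rule ccontr)
    assume "\<not> ?thesis"
    then have hyp: "\<forall>cs. cs \<noteq> [] \<and> distinct cs \<and> set (cyc_arcs cs) \<subseteq> A \<and> length cs < Suc (size H) \<longrightarrow> wt lab (mset (cyc_arcs cs)) = 0"
      by blast
    have "wt lab H = 0" using La[OF hyp balH HA] by simp
    then show False using \<open>wt lab H \<noteq> 0\<close> by simp
  qed
  then obtain cs where "cs \<noteq> []" "distinct cs" "set (cyc_arcs cs) \<subseteq> A" "wt lab (mset (cyc_arcs cs)) \<noteq> 0" by blast
  then show ?thesis unfolding A_def lab_def using directed_cycle_iff cycle_label_eq by metis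
qed

lemma backward_dir:
  fixes \<psi> :: "'a \<Rightarrow> 'g::ab_group_add"
  assumes no2: "\<forall>g::'g. g + g = 0 \<longrightarrow> g = 0"
    and m1: "matroid E M1" and m2: "matroid E M2" and B01: "B0 \<in> M1" and B02: "B0 \<in> M2"
    and z: "(\<Sum>x\<in>B0. \<psi> x) = 0"
    and C: "directed_cycle (exch_arcs E M1 M2 B0) C" "cycle_label (arc_label \<psi> B0) C \<noteq> 0"
  shows "\<exists>B. B \<in> M1 \<and> B \<in> M2 \<and> (\<Sum>x\<in>B. \<psi> x) \<noteq> 0"
proof -
  define A where "A = exch_arcs E M1 M2 B0"
  define lab where "lab = arc_label \<psi> B0"
  define w where "w v = (if v \<in> B0 then - \<psi> v else \<psi> v)" for v
  have wA: "\<forall>a\<in>A. lab a = w (snd a)" unfolding A_def lab_def w_def using arc_lab by blast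
  have irr: "\<forall>v. (v, v) \<notin> A" unfolding A_def by (simp add: arc_irr)
  define P where "P n \<longleftrightarrow> (\<exists>C. directed_cycle A C \<and> cycle_label lab C \<noteq> 0 \<and> length C = n)" for n
  have PC: "P (length C)" unfolding P_def A_def lab_def using C by blast
  define n where "n = (LEAST n. P n)"
  have "P n" unfolding n_def using LeastI[of P, OF PC] .
  then obtain cs where cs: "directed_cycle A cs" "cycle_label lab cs \<noteq> 0" "length cs = n"
    unfolding P_def by blast
  have minl: "cycle_label lab ds = 0" if "directed_cycle A ds" "length ds < n" for ds
  proof (rule ccontr)
    assume "cycle_label lab ds \<noteq> 0"
    hence "P (length ds)" unfolding P_def using that by blast
    hence "n \<le> length ds" unfolding n_def by (rule Least_le)
    then show False using that by simp
  qed
  have csne: "cs \<noteq> []" and dcs: "distinct cs" and csA: "set (cyc_arcs cs) \<subseteq> A"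
    using cs(1) directed_cycle_iff by blast+
  have hyp: "\<forall>ds. ds \<noteq> [] \<and> distinct ds \<and> set (cyc_arcs ds) \<subseteq> A \<and> length ds < length cs \<longrightarrow> wt lab (mset (cyc_arcs ds)) = 0"
    using minl cs(3) directed_cycle_iff cycle_label_eq by metis
  define V where "V = set cs"
  have wcs: "cycle_label lab cs = sum w V"
    unfolding cycle_label_eq V_def using cyc_vertex_wt[OF dcs] wA csA by blast
  have nz: "sum w (set cs) \<noteq> 0" using wcs cs(2) unfolding V_def by simp
  have finV: "finite V" unfolding V_def by simp
  have B0E: "B0 \<subseteq> E" using matroid_sub[OF m1 B01] .
  have VE: "V \<subseteq> E"
  proof
    fix v assume "v \<in> V"
    then have "v \<in> fst ` set (cyc_arcs cs)" using map_fst_cyc[of cs] unfolding V_def by (metis set_map)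
    then obtain u where "(v, u) \<in> A" using csA by force
    then show "v \<in> E" using arc_E[of v u E M1 M2 B0] B0E unfolding A_def by blast
  qed
  define nxt where "nxt v = the (map_of (cyc_arcs cs) v)" for v
  have dfst: "distinct (map fst (cyc_arcs cs))" using dcs map_fst_cyc by metis
  have N2: "nxt v = u" if "(v, u) \<in> set (cyc_arcs cs)" for v u
    unfolding nxt_def using map_of_is_SomeI[OF dfst that] by simp
  have N1: "(v, nxt v) \<in> set (cyc_arcs cs)" if "v \<in> V" for v
  proof -
    have "v \<in> fst ` set (cyc_arcs cs)" using that map_fst_cyc[of cs] unfolding V_def by (metis set_map)
    then obtain u where u: "(v, u) \<in> set (cyc_arcs cs)" by force
    then show ?thesis using N2[OF u] by simp
  qed
  have nA: "(v, nxt v) \<in> A" if "v \<in> V" for v using N1[OF that] csA by blast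
  have nxtV: "nxt v \<in> V" if "v \<in> V" for v
  proof -
    have "nxt v \<in> snd ` set (cyc_arcs cs)" using N1[OF that] by force
    then show ?thesis using map_snd_cyc[of cs] unfolding V_def by (metis set_map set_rotate1)
  qed
  have dsnd: "distinct (map snd (cyc_arcs cs))" using dcs map_snd_cyc by (metis distinct1_rotate)
  have injN: "inj_on nxt V"
  proof (rule inj_onI)
    fix a b assume a: "a \<in> V" and b: "b \<in> V" and e: "nxt a = nxt b"
    have i: "inj_on snd (set (cyc_arcs cs))" using dsnd by (simp add: distinct_map)
    have "(a, nxt a) \<in> set (cyc_arcs cs)" "(b, nxt b) \<in> set (cyc_arcs cs)" using N1[OF a] N1[OF b] by auto
    moreover have "snd (a, nxt a) = snd (b, nxt b)" using e by simp
    ultimately have "(a, nxt a) = (b, nxt b)" using inj_onD[OF i] by blast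
    then show "a = b" by simp
  qed
  have nVV: "nxt ` V = V" using endo_inj_surj[OF finV _ injN] nxtV by blast
  define X where "X = V \<inter> B0"
  define Y where "Y = V - B0"
  have finX: "finite X" unfolding X_def using finV by simp
  have XY: "X \<inter> Y = {}" unfolding X_def Y_def by blast
  have XV: "X \<subseteq> V" and YV: "Y \<subseteq> V" and XB0: "X \<subseteq> B0" unfolding X_def Y_def by auto
  have nX: "nxt x \<in> Y \<and> insert (nxt x) (B0 - {x}) \<in> M1" if "x \<in> X" for x
  proof -
    have "x \<in> V" "x \<in> B0" using that unfolding X_def by auto
    then have "nxt x \<in> E - B0 \<and> insert (nxt x) (B0 - {x}) \<in> M1"
      using arc_first[of x "nxt x" E M1 M2 B0] nA unfolding A_def by blast
    then show ?thesis using nxtV \<open>x \<in> V\<close> unfolding Y_def by blast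
  qed
  have nY: "nxt y \<in> X \<and> insert y (B0 - {nxt y}) \<in> M2" if "y \<in> Y" for y
  proof -
    have "y \<in> V" "y \<notin> B0" using that unfolding Y_def by auto
    then have "nxt y \<in> B0 \<and> insert y (B0 - {nxt y}) \<in> M2"
      using arc_second[of y "nxt y" E M1 M2 B0] nA unfolding A_def by blast
    then show ?thesis using nxtV \<open>y \<in> V\<close> unfolding X_def by blast
  qed
  have imX: "nxt ` X = Y"
  proof
    show "nxt ` X \<subseteq> Y" using nX by blast
    show "Y \<subseteq> nxt ` X"
    proof
      fix y assume y: "y \<in> Y"
      then obtain v where v: "v \<in> V" "y = nxt v" using nVV YV by blast
      have "v \<notin> Y" using nY[of v] y v(2) XY by blast
      then have "v \<in> X" using v(1) unfolding X_def Y_def by blast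
      then show "y \<in> nxt ` X" using v(2) by blast
    qed
  qed
  have imY: "nxt ` Y = X"
  proof
    show "nxt ` Y \<subseteq> X" using nY by blast
    show "X \<subseteq> nxt ` Y"
    proof
      fix x assume x: "x \<in> X"
      then obtain v where v: "v \<in> V" "x = nxt v" using nVV XV by blast
      have "v \<notin> X" using nX[of v] x v(2) XY by blast
      then have "v \<in> Y" using v(1) unfolding X_def Y_def by blast
      then show "x \<in> nxt ` Y" using v(2) by blast
    qed
  qed
  define Bst where "Bst = (B0 - X) \<union> Y"
  have injX: "inj_on nxt X" using inj_on_subset[OF injN XV] .
  have injY: "inj_on nxt Y" using inj_on_subset[OF injN YV] .
  have "Bst \<in> M1"
  proof -
    have nB: "\<forall>x\<in>X. nxt x \<notin> B0" using nX unfolding Y_def by blast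
    have nM: "\<forall>x\<in>X. insert (nxt x) (B0 - {x}) \<in> M1" using nX by blast
    from um[OF m1 B01 finX XB0 injX nB nM]
    show ?thesis
    proof
      assume "(B0 - X) \<union> nxt ` X \<in> M1"
      then show ?thesis unfolding Bst_def imX .
    next
      assume "\<exists>W h. W \<subseteq> X \<and> W \<noteq> {} \<and> bij_betw h W W \<and> (\<forall>z\<in>W. h z \<noteq> z \<and> insert (nxt (h z)) (B0 - {z}) \<in> M1)"
      then obtain W h where W: "W \<subseteq> X" "W \<noteq> {}" "bij_betw h W W"
        and Wh: "\<forall>z\<in>W. h z \<noteq> z \<and> insert (nxt (h z)) (B0 - {z}) \<in> M1" by blast
      have hW: "h z \<in> W" if "z \<in> W" for z using W(3) that unfolding bij_betw_def by blast
      have injh: "inj_on h W" using W(3) unfolding bij_betw_def by blast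
      define f where "f v = (if v \<in> W then nxt (h v) else nxt v)" for v
      have fprop: "\<forall>v\<in>set cs. f v \<in> set cs \<and> (v, f v) \<in> A"
      proof
        fix v assume "v \<in> set cs"
        hence vV: "v \<in> V" unfolding V_def .
        show "f v \<in> set cs \<and> (v, f v) \<in> A"
        proof (cases "v \<in> W")
          case True
          have hX: "h v \<in> X" using hW[OF True] W(1) by blast
          have fy: "f v = nxt (h v)" using True unfolding f_def by simp
          have yY: "nxt (h v) \<in> Y" using nX[OF hX] by blast
          have v0: "v \<in> B0" using True W(1) XB0 by blast
          have yE: "nxt (h v) \<in> E - B0" using yY YV VE unfolding Y_def by blast
          have i: "insert (nxt (h v)) (B0 - {v}) \<in> M1" using Wh True by blast
          have "(v, nxt (h v)) \<in> A" unfolding A_def by (rule first_arc[OF v0 yE i])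
          then show ?thesis using yY YV unfolding V_def fy by blast
        next
          case False
          then show ?thesis using nA[OF vV] nxtV[OF vV] unfolding f_def V_def by simp
        qed
      qed
      have injf: "inj_on f (set cs)"
      proof (rule inj_onI)
        fix a b assume a: "a \<in> set cs" and b: "b \<in> set cs" and e: "f a = f b"
        have aV: "a \<in> V" and bV: "b \<in> V" using a b unfolding V_def by auto
        show "a = b"
        proof (cases "a \<in> W")
          case aW: True
          show ?thesis
          proof (cases "b \<in> W")
            case True
            have "nxt (h a) = nxt (h b)" using e aW True unfolding f_def by simp
            hence "h a = h b" using injN hW[OF aW] hW[OF True] W(1) XV unfolding inj_on_def by blast
            then show ?thesis using injh aW True unfolding inj_on_def by blast
          next
            case False
            have "nxt (h a) = nxt b" using e aW False unfolding f_def by simp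
            hence "h a = b" using injN hW[OF aW] W(1) XV bV unfolding inj_on_def by blast
            then show ?thesis using hW[OF aW] False by blast
          qed
        next
          case aW: False
          show ?thesis
          proof (cases "b \<in> W")
            case True
            have "nxt a = nxt (h b)" using e aW True unfolding f_def by simp
            hence "a = h b" using injN hW[OF True] W(1) XV aV unfolding inj_on_def by blast
            then show ?thesis using hW[OF True] aW by blast
          next
            case False
            have "nxt a = nxt b" using e aW False unfolding f_def by simp
            then show ?thesis using injN aV bV unfolding inj_on_def by blast
          qed
        qed
      qed
      obtain z0 where z0: "z0 \<in> W" using W(2) by blast
      have z0V: "z0 \<in> set cs" using z0 W(1) XV unfolding V_def by blast
      have "(z0, f z0) \<notin> set (cyc_arcs cs)"
      proof
        assume "(z0, f z0) \<in> set (cyc_arcs cs)"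
        hence "nxt z0 = nxt (h z0)" using N2 z0 unfolding f_def by simp
        hence "z0 = h z0" using injN hW[OF z0] z0 W(1) XV unfolding inj_on_def by blast
        then show False using Wh z0 by metis
      qed
      then show ?thesis using core[OF no2 irr wA csne dcs csA nz hyp fprop injf z0V] by blast
    qed
  qed
  moreover have "Bst \<in> M2"
  proof -
    define pre where "pre = inv_into Y nxt"
    have bN: "bij_betw nxt Y X" using injY imY unfolding bij_betw_def by blast
    have bP: "bij_betw pre X Y" unfolding pre_def by (rule bij_betw_inv_into[OF bN])
    have np: "nxt (pre x) = x" if "x \<in> X" for x unfolding pre_def using bij_betw_inv_into_right[OF bN that] .
    have pn: "pre (nxt y) = y" if "y \<in> Y" for y unfolding pre_def using inv_into_f_f[OF injY that] .
    have pY: "pre x \<in> Y" if "x \<in> X" for x using bP that unfolding bij_betw_def by blast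
    have injP: "inj_on pre X" using bP unfolding bij_betw_def by blast
    have imP: "pre ` X = Y" using bP unfolding bij_betw_def by blast
    have nB: "\<forall>x\<in>X. pre x \<notin> B0" using pY unfolding Y_def by blast
    have nM: "\<forall>x\<in>X. insert (pre x) (B0 - {x}) \<in> M2"
    proof
      fix x assume x: "x \<in> X"
      show "insert (pre x) (B0 - {x}) \<in> M2" using nY[OF pY[OF x]] np[OF x] by simp
    qed
    from um[OF m2 B02 finX XB0 injP nB nM]
    show ?thesis
    proof
      assume "(B0 - X) \<union> pre ` X \<in> M2"
      then show ?thesis unfolding Bst_def imP .
    next
      assume "\<exists>W h. W \<subseteq> X \<and> W \<noteq> {} \<and> bij_betw h W W \<and> (\<forall>z\<in>W. h z \<noteq> z \<and> insert (pre (h z)) (B0 - {z}) \<in> M2)"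
      then obtain W h where W: "W \<subseteq> X" "W \<noteq> {}" "bij_betw h W W"
        and Wh: "\<forall>z\<in>W. h z \<noteq> z \<and> insert (pre (h z)) (B0 - {z}) \<in> M2" by blast
      define hi where "hi = inv_into W h"
      have bhi: "bij_betw hi W W" unfolding hi_def by (rule bij_betw_inv_into[OF W(3)])
      have hhi: "h (hi u) = u" if "u \<in> W" for u unfolding hi_def using bij_betw_inv_into_right[OF W(3) that] .
      have hiW: "hi u \<in> W" if "u \<in> W" for u using bhi that unfolding bij_betw_def by blast
      have injhi: "inj_on hi W" using bhi unfolding bij_betw_def by blast
      define f where "f v = (if v \<in> Y \<and> nxt v \<in> W then hi (nxt v) else nxt v)" for v
      have fprop: "\<forall>v\<in>set cs. f v \<in> set cs \<and> (v, f v) \<in> A"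
      proof
        fix v assume "v \<in> set cs"
        hence vV: "v \<in> V" unfolding V_def .
        show "f v \<in> set cs \<and> (v, f v) \<in> A"
        proof (cases "v \<in> Y \<and> nxt v \<in> W")
          case True
          define zz where "zz = hi (nxt v)"
          have zW: "zz \<in> W" unfolding zz_def using hiW True by blast
          have fz: "f v = zz" unfolding f_def zz_def using True by simp
          have hz: "h zz = nxt v" unfolding zz_def using hhi True by blast
          have "pre (h zz) = v" using hz pn True by simp
          hence i: "insert v (B0 - {zz}) \<in> M2" using Wh zW by metis
          have z0: "zz \<in> B0" using zW W(1) XB0 by blast
          have vE: "v \<in> E - B0" using True VE YV unfolding Y_def by blast
          have "(v, zz) \<in> A" unfolding A_def by (rule second_arc[OF z0 vE i])
          then show ?thesis using zW W(1) XV unfolding V_def fz by blast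
        next
          case False
          then have "f v = nxt v" unfolding f_def by auto
          then show ?thesis using nA[OF vV] nxtV[OF vV] unfolding V_def by simp
        qed
      qed
      have fW: "f v \<in> W" if "v \<in> Y" "nxt v \<in> W" for v using that hiW unfolding f_def by simp
      have cross: False if "a \<in> V" "a \<in> Y" "nxt a \<in> W" "b \<in> V" "\<not> (b \<in> Y \<and> nxt b \<in> W)" "f a = f b" for a b
      proof -
        have "f b = nxt b" using that(5) unfolding f_def by auto
        hence nbW: "nxt b \<in> W" using fW[OF that(2,3)] that(6) by simp
        have "b \<notin> X"
        proof
          assume "b \<in> X"
          hence "nxt b \<in> Y" using nX by blast
          then show False using nbW W(1) XY by blast
        qed
        hence "b \<in> Y" using that(4) unfolding X_def Y_def by blast
        then show False using that(5) nbW by blast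
      qed
      have injf: "inj_on f (set cs)"
      proof (rule inj_onI)
        fix a b assume a: "a \<in> set cs" and b: "b \<in> set cs" and e: "f a = f b"
        have aV: "a \<in> V" and bV: "b \<in> V" using a b unfolding V_def by auto
        show "a = b"
        proof (cases "a \<in> Y \<and> nxt a \<in> W")
          case ca: True
          show ?thesis
          proof (cases "b \<in> Y \<and> nxt b \<in> W")
            case True
            have "hi (nxt a) = hi (nxt b)" using e ca True unfolding f_def by simp
            hence "nxt a = nxt b" using injhi ca True unfolding inj_on_def by blast
            then show ?thesis using injN aV bV unfolding inj_on_def by blast
          next
            case False
            then show ?thesis using cross[OF aV _ _ bV False e] ca by blast
          qed
        next
          case ca: False
          show ?thesis
          proof (cases "b \<in> Y \<and> nxt b \<in> W")
            case True
            then show ?thesis using cross[OF bV _ _ aV ca e[symmetric]] by blast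
          next
            case False
            have "nxt a = nxt b" using e ca False unfolding f_def by simp
            then show ?thesis using injN aV bV unfolding inj_on_def by blast
          qed
        qed
      qed
      obtain u where u: "u \<in> W" using W(2) by blast
      have uX: "u \<in> X" using u W(1) by blast
      define v where "v = pre u"
      have vY: "v \<in> Y" unfolding v_def using pY[OF uX] .
      have nv: "nxt v = u" unfolding v_def using np[OF uX] .
      have vV: "v \<in> set cs" using vY YV unfolding V_def by blast
      have fv: "f v = hi u" unfolding f_def using vY nv u by simp
      have "hi u \<noteq> u"
      proof
        assume "hi u = u"
        hence "h u = u" using hhi[OF u] by simp
        then show False using Wh u by blast
      qed
      have "(v, f v) \<notin> set (cyc_arcs cs)"
      proof
        assume "(v, f v) \<in> set (cyc_arcs cs)"
        hence "nxt v = f v" using N2 by blast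
        then show False using nv fv \<open>hi u \<noteq> u\<close> by simp
      qed
      then show ?thesis using core[OF no2 irr wA csne dcs csA nz hyp fprop injf vV] by blast
    qed
  qed
  moreover have "sum \<psi> Bst \<noteq> 0"
  proof -
    have finB0: "finite B0" using matroid_finite[OF m1 B01] .
    have "sum \<psi> Bst = sum \<psi> (B0 - X) + sum \<psi> Y" unfolding Bst_def
      using finB0 finV YV by (intro sum.union_disjoint) (auto simp: Y_def intro: finite_subset)
    also have "sum \<psi> (B0 - X) = sum \<psi> B0 - sum \<psi> X" using sum_diff[OF finB0 XB0] .
    finally have e1: "sum \<psi> Bst = sum \<psi> Y - sum \<psi> X" using z by simp
    have "sum w V = sum w X + sum w Y"
    proof -
      have "V = X \<union> Y" unfolding X_def Y_def by blast
      then show ?thesis using finV XY by (simp add: sum.union_disjoint)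
    qed
    also have "sum w X = - sum \<psi> X" unfolding w_def X_def by (simp add: sum_negf)
    also have "sum w Y = sum \<psi> Y" unfolding w_def Y_def by simp
    finally have "sum w V = sum \<psi> Y - sum \<psi> X" by simp
    then show ?thesis using e1 nz unfolding V_def by simp
  qed
  ultimately show ?thesis by blast
qed


theorem theorem3p8:
  fixes E :: "'a set" and M1 M2 :: "'a set set"
    and \<psi> :: "'a \<Rightarrow> 'g::ab_group_add" and B0 :: "'a set"
  assumes no_order_two: "\<forall>g::'g. g + g = 0 \<longrightarrow> g = 0"
    and "matroid E M1" and "matroid E M2"
    and "B0 \<in> M1" and "B0 \<in> M2"
    and "(\<Sum>x\<in>B0. \<psi> x) = 0"
  shows "(\<exists>B. B \<in> M1 \<and> B \<in> M2 \<and> (\<Sum>x\<in>B. \<psi> x) \<noteq> 0) \<longleftrightarrow>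
         (\<exists>C. directed_cycle (exch_arcs E M1 M2 B0) C \<and>
              cycle_label (arc_label \<psi> B0) C \<noteq> 0)"
proof
  assume "\<exists>B. B \<in> M1 \<and> B \<in> M2 \<and> (\<Sum>x\<in>B. \<psi> x) \<noteq> 0"
  then obtain B where B: "B \<in> M1" "B \<in> M2" "(\<Sum>x\<in>B. \<psi> x) \<noteq> 0" by blast
  show "\<exists>C. directed_cycle (exch_arcs E M1 M2 B0) C \<and> cycle_label (arc_label \<psi> B0) C \<noteq> 0"
    by (rule forward_dir[OF assms(2-6) B])
next
  assume "\<exists>C. directed_cycle (exch_arcs E M1 M2 B0) C \<and> cycle_label (arc_label \<psi> B0) C \<noteq> 0"
  then obtain C where C: "directed_cycle (exch_arcs E M1 M2 B0) C" "cycle_label (arc_label \<psi> B0) C \<noteq> 0" by blast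
  show "\<exists>B. B \<in> M1 \<and> B \<in> M2 \<and> (\<Sum>x\<in>B. \<psi> x) \<noteq> 0"
    by (rule backward_dir[OF no_order_two assms(2-6) C])
qed

end
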